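(* Let $P$ and $Q$ be upper primes. Then $PQ-QP$ lies in the two-sided ideal of $\mathcal{A}$ generated by $\{U(LR)-(LR)U : U \text{ an upper prime}\}$.
   Context: $\mathcal{A}$ is the free associative $\mathbb{C}$-algebra on noncommuting generators $L,R$; words are finite products of these letters. A word is balanced if it contains equally many $L$'s and $R$'s. A word is prime if it is nonempty, balanced, and not a product of two nonempty balanced words. For a balanced word $W=a_1\cdots a_n$, $e_k(W)=\sum_{i=1}^k\overline{a_i}$ with $\overline{R}=1$, $\overline{L}=-1$. A prime $P$ of length $n$ is an upper prime if $e_k(P)>0$ for all $1\le k\le n-1$. *)

theory Defs
  imports Complex_Main "HOL-Library.Poly_Mapping"
begin

datatype letter = L | R

type_synonym word = "letter list"

text \<open>The free associative C-algebra on L, R: finitely supported C-valued functions on words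
  (coefficient of each word), with concatenation-convolution as product.\<close>
type_synonym alg = "word \<Rightarrow>\<^sub>0 complex"

definition wd :: "word \<Rightarrow> alg" where
  "wd w = Poly_Mapping.single w 1"

definition amul :: "alg \<Rightarrow> alg \<Rightarrow> alg" where
  "amul p q = (\<Sum>u\<in>Poly_Mapping.keys p. \<Sum>v\<in>Poly_Mapping.keys q. Poly_Mapping.single (u @ v) (Poly_Mapping.lookup p u * Poly_Mapping.lookup q v))"

inductive_set ideal_gen :: "alg set \<Rightarrow> alg set" for S :: "alg set" where
  gen: "s \<in> S \<Longrightarrow> s \<in> ideal_gen S"
| zero: "0 \<in> ideal_gen S"
| add: "x \<in> ideal_gen S \<Longrightarrow> y \<in> ideal_gen S \<Longrightarrow> x + y \<in> ideal_gen S"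
| lmul: "x \<in> ideal_gen S \<Longrightarrow> amul a x \<in> ideal_gen S"
| rmul: "x \<in> ideal_gen S \<Longrightarrow> amul x a \<in> ideal_gen S"

definition balanced :: "word \<Rightarrow> bool" where
  "balanced w \<longleftrightarrow> length (filter (\<lambda>a. a = L) w) = length (filter (\<lambda>a. a = R) w)"

definition prime_word :: "word \<Rightarrow> bool" where
  "prime_word w \<longleftrightarrow> w \<noteq> [] \<and> balanced w \<and>
     \<not> (\<exists>u v. u \<noteq> [] \<and> v \<noteq> [] \<and> balanced u \<and> balanced v \<and> w = u @ v)"

fun lval :: "letter \<Rightarrow> int" where
  "lval R = 1"
| "lval L = -1"

text \<open>e k W = sum of the bar-values of the first k letters (letters a_1..a_k = w!0..w!(k-1)).\<close>
definition e :: "nat \<Rightarrow> word \<Rightarrow> int" where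
  "e k w = (\<Sum>i<k. lval (w ! i))"

definition upper_prime :: "word \<Rightarrow> bool" where
  "upper_prime P \<longleftrightarrow> prime_word P \<and> (\<forall>k. 1 \<le> k \<and> k \<le> length P - 1 \<longrightarrow> e k P > 0)"

end

theory Submission
  imports Defs
begin

lemma amul_sets:
  assumes "finite A" "Poly_Mapping.keys p \<subseteq> A" "finite B" "Poly_Mapping.keys q \<subseteq> B"
  shows "amul p q = (\<Sum>u\<in>A. \<Sum>v\<in>B. Poly_Mapping.single (u @ v) (Poly_Mapping.lookup p u * Poly_Mapping.lookup q v))"
proof -
  have "amul p q = (\<Sum>u\<in>Poly_Mapping.keys p. \<Sum>v\<in>B. Poly_Mapping.single (u @ v) (Poly_Mapping.lookup p u * Poly_Mapping.lookup q v))"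
    unfolding amul_def
    apply (rule sum.cong[OF refl])
    apply (rule sum.mono_neutral_left)
    using assms by (auto simp: in_keys_iff)
  also have "\<dots> = (\<Sum>u\<in>A. \<Sum>v\<in>B. Poly_Mapping.single (u @ v) (Poly_Mapping.lookup p u * Poly_Mapping.lookup q v))"
    apply (rule sum.mono_neutral_left)
    using assms by (auto simp: in_keys_iff)
  finally show ?thesis .
qed

lemma keys_wd_diff: "Poly_Mapping.keys (wd a - wd b) \<subseteq> {a, b}"
  by (auto simp: in_keys_iff wd_def lookup_minus lookup_single when_def split: if_splits)

lemma keys_single_sub: "Poly_Mapping.keys (Poly_Mapping.single x c) \<subseteq> {x}"
  by auto

lemma amul_single_diff:
  "amul (Poly_Mapping.single x c) (wd a - wd b) = Poly_Mapping.single (x @ a) c - Poly_Mapping.single (x @ b) c"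
proof (cases "a = b")
  case True
  then show ?thesis by (simp add: amul_def)
next
  case False
  show ?thesis
    apply (subst amul_sets[OF _ keys_single_sub _ keys_wd_diff])
    using False by (auto simp: wd_def lookup_minus lookup_single when_def single_uminus)
qed

lemma amul_diff_single:
  "amul (wd a - wd b) (Poly_Mapping.single x c) = Poly_Mapping.single (a @ x) c - Poly_Mapping.single (b @ x) c"
proof (cases "a = b")
  case True
  then show ?thesis by (simp add: amul_def)
next
  case False
  show ?thesis
    apply (subst amul_sets[OF _ keys_wd_diff _ keys_single_sub])
    using False by (auto simp: wd_def lookup_minus lookup_single when_def single_uminus)
qed

lemma amul_wd_wd: "amul (wd a) (wd b) = wd (a @ b)"
  by (simp add: amul_def wd_def)

definition GS :: "alg set" where
  "GS = {amul (wd U) (wd [L, R]) - amul (wd [L, R]) (wd U) | U. upper_prime U}"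

definition rel :: "word \<Rightarrow> word \<Rightarrow> bool" where
  "rel a b \<longleftrightarrow> wd a - wd b \<in> ideal_gen GS"

lemma rel_refl: "rel a a"
  by (simp add: rel_def ideal_gen.zero)

lemma rel_trans: "rel a b \<Longrightarrow> rel b c \<Longrightarrow> rel a c"
  unfolding rel_def using ideal_gen.add by fastforce

lemma rel_sym: "rel a b \<Longrightarrow> rel b a"
proof -
  assume "rel a b"
  hence "amul (Poly_Mapping.single [] (-1)) (wd a - wd b) \<in> ideal_gen GS"
    unfolding rel_def by (rule ideal_gen.lmul)
  moreover have "amul (Poly_Mapping.single [] (-1)) (wd a - wd b) = wd b - wd a"
    by (subst amul_single_diff) (simp add: single_uminus wd_def)
  ultimately show ?thesis unfolding rel_def by simp
qed

lemma rel_ctx: "rel a b \<Longrightarrow> x @ a @ y = s \<Longrightarrow> x @ b @ y = t \<Longrightarrow> rel s t"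
proof -
  assume h: "rel a b" "x @ a @ y = s" "x @ b @ y = t"
  hence "amul (amul (wd x) (wd a - wd b)) (wd y) \<in> ideal_gen GS"
    unfolding rel_def by (intro ideal_gen.rmul ideal_gen.lmul)
  moreover have "amul (amul (wd x) (wd a - wd b)) (wd y) = wd s - wd t"
    using h(2,3) by (simp add: amul_single_diff[of x 1, folded wd_def] amul_diff_single[of _ _ y 1, folded wd_def])
  ultimately show ?thesis unfolding rel_def by simp
qed

lemma rel_gen: "upper_prime U \<Longrightarrow> rel (U @ [L, R]) ([L, R] @ U)"
  unfolding rel_def GS_def amul_wd_wd[symmetric]
  by (blast intro: ideal_gen.gen)

definition h :: "word \<Rightarrow> int" where
  "h w = sum_list (map lval w)"

lemma h_simps[simp]: "h [] = 0" "h (a # w) = lval a + h w" "h (u @ v) = h u + h v"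
  by (auto simp: h_def)

lemma h_count: "h w = int (length (filter (\<lambda>a. a = R) w)) - int (length (filter (\<lambda>a. a = L) w))"
proof (induction w)
  case (Cons a w) then show ?case by (cases a) auto
qed simp

lemma balanced_h: "balanced w \<longleftrightarrow> h w = 0"
  by (auto simp: balanced_def h_count)

lemma e_h: "k \<le> length w \<Longrightarrow> e k w = h (take k w)"
proof (induction k)
  case 0 then show ?case by (simp add: e_def)
next
  case (Suc k)
  then have "e (Suc k) w = h (take k w) + lval (w ! k)" by (simp add: e_def)
  also have "\<dots> = h (take (Suc k) w)" using Suc.prems by (simp add: take_Suc_conv_app_nth)
  finally show ?case .
qed

lemma upper_primeI:
  assumes "P \<noteq> []" "h P = 0" "\<And>k. 0 < k \<Longrightarrow> k < length P \<Longrightarrow> h (take k P) > 0"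
  shows "upper_prime P"
  unfolding upper_prime_def prime_word_def
proof (intro conjI allI impI)
  show "P \<noteq> []" by fact
  show "balanced P" using assms(2) by (simp add: balanced_h)
next
  show "\<not> (\<exists>u v. u \<noteq> [] \<and> v \<noteq> [] \<and> balanced u \<and> balanced v \<and> P = u @ v)"
  proof
  assume "\<exists>u v. u \<noteq> [] \<and> v \<noteq> [] \<and> balanced u \<and> balanced v \<and> P = u @ v"
  then obtain u v where uv: "u \<noteq> []" "v \<noteq> []" "balanced u" "P = u @ v" by blast
  have "h (take (length u) P) > 0" using uv by (intro assms(3)) auto
  then show False using uv by (simp add: balanced_h)
  qed
next
  fix k assume "1 \<le> k \<and> k \<le> length P - 1"
  then have k: "0 < k" "k < length P" using assms(1) by (cases P; auto)+
  then show "e k P > 0" using assms(3)[OF k] by (simp add: e_h)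
qed

lemma upper_primeD:
  assumes "upper_prime P"
  shows "P \<noteq> []" "h P = 0" "\<And>k. 0 < k \<Longrightarrow> k < length P \<Longrightarrow> h (take k P) > 0"
proof -
  show "P \<noteq> []" "h P = 0" using assms by (auto simp: upper_prime_def prime_word_def balanced_h)
  fix k assume "0 < k" "k < length P"
  then have "e k P > 0" using assms unfolding upper_prime_def by auto
  then show "h (take k P) > 0" using \<open>k < length P\<close> by (simp add: e_h)
qed

inductive dyck :: "word \<Rightarrow> bool" where
  nil: "dyck []"
| cons: "dyck A \<Longrightarrow> dyck B \<Longrightarrow> dyck (R # A @ L # B)"

lemma dyck_props: "dyck A \<Longrightarrow> h A = 0 \<and> (\<forall>k. h (take k A) \<ge> 0)"
proof (induction rule: dyck.induct)
  case nil then show ?case by simp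
next
  case (cons A B)
  show ?case
  proof (intro conjI allI)
    show "h (R # A @ L # B) = 0" using cons by simp
    fix k
    show "h (take k (R # A @ L # B)) \<ge> 0"
    proof (cases k)
      case 0 then show ?thesis by simp
    next
      case (Suc j)
      show ?thesis
      proof (cases "j \<le> length A")
        case True
        then show ?thesis using cons Suc by (simp add: take_append)
      next
        case False
        define i where "i = j - Suc (length A)"
        have "j = Suc (length A + i)" using False unfolding i_def by simp
        then show ?thesis using cons Suc by (simp add: take_append)
      qed
    qed
  qed
qed

lemma dyck_upper: "dyck A \<Longrightarrow> upper_prime (R # A @ [L])"
proof (rule upper_primeI)
  assume d: "dyck A"
  show "h (R # A @ [L]) = 0" using dyck_props[OF d] by simp
  fix k assume "0 < k" "k < length (R # A @ [L])"
  then obtain j where "k = Suc j" "j \<le> length A" by (cases k) auto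
  moreover have "h (take j A) \<ge> 0" using dyck_props[OF d] by blast
  ultimately show "h (take k (R # A @ [L])) > 0" by (simp add: take_append)
qed simp

fun dk :: "nat \<Rightarrow> word \<Rightarrow> bool" where
  "dk 0 w = dyck w"
| "dk (Suc n) w = (\<exists>B w'. dyck B \<and> w = B @ L # w' \<and> dk n w')"

lemma to_dk: "(\<forall>k. int n + h (take k w) \<ge> 0) \<Longrightarrow> int n + h w = 0 \<Longrightarrow> dk n w"
proof (induction w arbitrary: n)
  case Nil then show ?case by (simp add: dyck.nil)
next
  case (Cons a w)
  show ?case
  proof (cases a)
    case L
    have "int n + h (take 1 (a # w)) \<ge> 0" using Cons.prems by blast
    then obtain m where m: "n = Suc m" using L by (cases n) auto
    have "\<forall>k. int m + h (take k w) \<ge> 0"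
    proof
      fix k have "int n + h (take (Suc k) (a # w)) \<ge> 0" using Cons.prems by blast
      then show "int m + h (take k w) \<ge> 0" using L m by simp
    qed
    moreover have "int m + h w = 0" using Cons.prems L m by simp
    ultimately have "dk m w" by (rule Cons.IH)
    then show ?thesis using m L by (auto intro: exI[of _ "[]"] dyck.nil)
  next
    case R
    have "\<forall>k. int (Suc n) + h (take k w) \<ge> 0"
    proof
      fix k have "int n + h (take (Suc k) (a # w)) \<ge> 0" using Cons.prems by blast
      then show "int (Suc n) + h (take k w) \<ge> 0" using R by simp
    qed
    moreover have "int (Suc n) + h w = 0" using Cons.prems R by simp
    ultimately have "dk (Suc n) w" by (rule Cons.IH)
    then obtain B w' where B: "dyck B" "w = B @ L # w'" "dk n w'" by auto
    show ?thesis
    proof (cases n)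
      case 0
      then show ?thesis using B R by (auto intro: dyck.cons)
    next
      case (Suc m)
      then obtain B' w'' where B': "dyck B'" "w' = B' @ L # w''" "dk m w''" using B by auto
      have "dyck (R # B @ L # B')" using B B' by (intro dyck.cons)
      moreover have "a # w = (R # B @ L # B') @ L # w''" using R B B' by simp
      ultimately show ?thesis using Suc B' by auto
    qed
  qed
qed

lemma upper_dyck:
  assumes "upper_prime P"
  shows "\<exists>A. dyck A \<and> P = R # A @ [L]"
proof -
  note u = upper_primeD[OF assms]
  have "\<forall>k. int 0 + h (take k P) \<ge> 0"
  proof
    fix k show "int 0 + h (take k P) \<ge> 0"
      using u(3)[of k] u(2) by (cases "k = 0"; cases "k < length P") (auto dest: less_imp_le)
  qed
  then have "dk 0 P" using u(2) by (intro to_dk) auto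
  then have "dyck P" by simp
  then obtain A B where AB: "dyck A" "dyck B" "P = R # A @ L # B"
    using u(1) by (cases rule: dyck.cases) auto
  have "B = []"
  proof (rule ccontr)
    assume "B \<noteq> []"
    then have "h (take (length A + 2) P) > 0" using AB by (intro u(3)) auto
    then show False using AB dyck_props[OF AB(1)] by (simp add: take_append)
  qed
  then show ?thesis using AB by auto
qed

lemma dyck_LR: "dyck D \<Longrightarrow> rel (D @ [L, R]) ([L, R] @ D)"
proof (induction rule: dyck.induct)
  case nil then show ?case by (simp add: rel_refl)
next
  case (cons A B)
  define P where "P = R # A @ [L]"
  have up: "upper_prime P" unfolding P_def using cons(1) by (rule dyck_upper)
  have 1: "rel (P @ B @ [L, R]) (P @ [L, R] @ B)"
    by (rule rel_ctx[OF cons(4), of P "[]"]) auto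
  have 2: "rel (P @ [L, R] @ B) ([L, R] @ P @ B)"
    by (rule rel_ctx[OF rel_gen[OF up], of "[]" B]) auto
  show ?case using rel_trans[OF 1 2] by (simp add: P_def)
qed

lemma comm1:
  assumes "dyck A" "dyck C" "rel (A @ C) (C @ A)"
  shows "rel ((R # A @ [L]) @ (R # C @ [L])) ((R # C @ [L]) @ (R # A @ [L]))"
proof -
  have 1: "rel ((R # A @ [L]) @ (R # C @ [L])) ([R] @ A @ C @ [L, R, L])"
    by (rule rel_ctx[OF rel_sym[OF dyck_LR[OF assms(2)]], of "[R] @ A" "[L]"]) auto
  have 2: "rel ([R] @ A @ C @ [L, R, L]) ([R] @ C @ A @ [L, R, L])"
    by (rule rel_ctx[OF assms(3), of "[R]" "[L, R, L]"]) auto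
  have 3: "rel ([R] @ C @ A @ [L, R, L]) ((R # C @ [L]) @ (R # A @ [L]))"
    by (rule rel_ctx[OF dyck_LR[OF assms(1)], of "[R] @ C" "[L]"]) auto
  show ?thesis using rel_trans[OF rel_trans[OF 1 2] 3] .
qed

lemma comm_dyck: "dyck D \<Longrightarrow> dyck E \<Longrightarrow> length D + length E = n \<Longrightarrow> rel (D @ E) (E @ D)"
proof (induction n arbitrary: D E rule: less_induct)
  case (less n)
  show ?case
  proof (cases "D = [] \<or> E = []")
    case True then show ?thesis by (auto simp: rel_refl)
  next
    case False
    obtain A B where AB: "dyck A" "dyck B" "D = R # A @ L # B"
      using less.prems(1) False by (cases rule: dyck.cases) auto
    obtain C F where CF: "dyck C" "dyck F" "E = R # C @ L # F"
      using less.prems(2) False by (cases rule: dyck.cases) auto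
    define P where "P = R # A @ [L]"
    define Q where "Q = R # C @ [L]"
    have dP: "dyck P" "dyck Q" unfolding P_def Q_def using AB CF dyck.cons[OF _ dyck.nil] by auto
    have "rel (B @ Q) (Q @ B)"
      using less.IH[OF _ AB(2) dP(2) refl] less.prems(3) AB CF Q_def by simp
    then have 1: "rel (D @ E) (P @ Q @ B @ F)"
      by (rule rel_ctx[of _ _ P F]) (auto simp: AB CF P_def Q_def)
    have "rel (A @ C) (C @ A)"
      using less.IH[OF _ AB(1) CF(1) refl] less.prems(3) AB CF by simp
    then have "rel (P @ Q) (Q @ P)" unfolding P_def Q_def using AB(1) CF(1) comm1 by blast
    then have 2: "rel (P @ Q @ B @ F) (Q @ P @ B @ F)"
      by (rule rel_ctx[of _ _ "[]" "B @ F"]) auto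
    have "rel (D @ F) (F @ D)"
      using less.IH[OF _ less.prems(1) CF(2) refl] less.prems(3) CF by simp
    then have 3: "rel (Q @ P @ B @ F) (E @ D)"
      by (rule rel_ctx[of _ _ Q "[]"]) (auto simp: AB CF P_def Q_def)
    show ?thesis using rel_trans[OF rel_trans[OF 1 2] 3] .
  qed
qed

theorem lemma5p1:
  assumes "upper_prime P" and "upper_prime Q"
  shows "amul (wd P) (wd Q) - amul (wd Q) (wd P) \<in>
    ideal_gen {amul (wd U) (wd [L, R]) - amul (wd [L, R]) (wd U) | U. upper_prime U}"
proof -
  obtain A where A: "dyck A" "P = R # A @ [L]" using upper_dyck[OF assms(1)] by blast
  obtain C where C: "dyck C" "Q = R # C @ [L]" using upper_dyck[OF assms(2)] by blast
  have "rel (P @ Q) (Q @ P)" using comm1[OF A(1) C(1) comm_dyck[OF A(1) C(1) refl]] A C by simp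
  then show ?thesis unfolding rel_def GS_def amul_wd_wd .
qed

end
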